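(* Let $n\ge 2$, $k>k(n)$, and let $0<z_1<z_2$ be the two positive roots of $z\mapsto H(z,k)$. Then for every $z\in[z_1,z_2]$ the quintuple $(z+1,\,k,\,1,\,z+1,\,k+1)$ is admissible.
   Context: $H(z,k)=-nz^3+(k^2-3n)z^2-(3n+2k)z-(n-1)$; $k(n)=3\sqrt n\cos\big(\tfrac13\arccos(1/\sqrt n)\big)$. A quintuple $(a,b,c,d,\theta)$ is admissible if $d\ge a>c>0$, $\theta>b\ge 0$, and $(a-c)^2\theta^2-a(\theta-b)\big[(2\theta+na)(a-c)+a(n-1)(\theta-b)\big]\ge 0$. *)

theory Defs
  imports Complex_Main
begin

definition H :: "nat \<Rightarrow> real \<Rightarrow> real \<Rightarrow> real" where
  "H n z k = - real n * z ^ 3 + (k ^ 2 - 3 * real n) * z ^ 2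
             - (3 * real n + 2 * k) * z - (real n - 1)"

definition kcrit :: "nat \<Rightarrow> real" where
  "kcrit n = 3 * sqrt (real n) * cos (arccos (1 / sqrt (real n)) / 3)"

definition admissible :: "nat \<Rightarrow> real \<Rightarrow> real \<Rightarrow> real \<Rightarrow> real \<Rightarrow> real \<Rightarrow> bool" where
  "admissible n a b c d \<theta> \<longleftrightarrow>
     d \<ge> a \<and> a > c \<and> c > 0 \<and> \<theta> > b \<and> b \<ge> 0 \<and>
     (a - c)^2 * \<theta>^2 - a * (\<theta> - b) * ((2 * \<theta> + real n * a) * (a - c)
        + a * (real n - 1) * (\<theta> - b)) \<ge> 0"

end

theory Submission
  imports Defs
begin

lemma kcrit_pos: assumes "n \<ge> 2" shows "kcrit n > 0"
proof -
  have s: "sqrt (real n) \<ge> 1" using assms by simp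
  hence y: "1 / sqrt (real n) \<le> 1" "-1 \<le> 1 / sqrt (real n)" by (auto simp: divide_simps)
     (use s in linarith)
  have "0 \<le> arccos (1 / sqrt (real n))" "arccos (1 / sqrt (real n)) \<le> pi"
    using arccos_lbound arccos_ubound y by auto
  hence "cos (arccos (1 / sqrt (real n)) / 3) > 0"
    by (intro cos_gt_zero_pi) (use pi_gt_zero in linarith)+
  moreover have "sqrt (real n) > 0" using s by linarith
  ultimately show ?thesis unfolding kcrit_def by simp
qed

theorem mainTheorem6:
  fixes n :: nat and k z1 z2 z :: real
  assumes "n \<ge> 2"
    and "k > kcrit n"
    and "0 < z1" and "z1 < z2"
    and "{w. 0 < w \<and> H n w k = 0} = {z1, z2}"
    and "z1 \<le> z" and "z \<le> z2"
  shows "admissible n (z + 1) k 1 (z + 1) (k + 1)"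
proof -
  have k0: "k > 0" using kcrit_pos[OF assms(1)] assms(2) by linarith
  have h1: "H n z1 k = 0" and h2: "H n z2 k = 0" using assms(5) by blast+
  have np: "real n > 0" using assms(1) by simp
  define r where "r = -(real n - 1) / (real n * z1 * z2)"
  have rn: "real n * z1 * z2 * r = -(real n - 1)" unfolding r_def using np assms(3,4) by simp
  have rneg: "r < 0" unfolding r_def using np assms(1,3,4) by (simp add: divide_simps)
  define F where "F w = - real n * (w - z1) * (w - z2) * (w - r)" for w
  define \<alpha> where "\<alpha> = k^2 - 3 * real n - real n * (z1 + z2 + r)"
  define \<beta> where "\<beta> = -(3 * real n + 2 * k) + real n * (z1 * z2 + z1 * r + z2 * r)"
  have D: "H n w k - F w = \<alpha> * w^2 + \<beta> * w" for w
    unfolding H_def F_def \<alpha>_def \<beta>_def using rn by (simp add: algebra_simps power2_eq_square power3_eq_cube)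
  have F1: "F z1 = 0" "F z2 = 0" unfolding F_def by simp_all
  have e1: "\<alpha> * z1 + \<beta> = 0"
  proof -
    have "z1 * (\<alpha> * z1 + \<beta>) = 0" using D[of z1] h1 F1 by (simp add: algebra_simps power2_eq_square)
    thus ?thesis using assms(3) by simp
  qed
  have e2: "\<alpha> * z2 + \<beta> = 0"
  proof -
    have "z2 * (\<alpha> * z2 + \<beta>) = 0" using D[of z2] h2 F1 by (simp add: algebra_simps power2_eq_square)
    thus ?thesis using assms(3,4) by simp
  qed
  have "\<alpha> * (z2 - z1) = 0" proof -
    have "\<alpha> * (z2 - z1) = (\<alpha> * z2 + \<beta>) - (\<alpha> * z1 + \<beta>)" by (simp add: algebra_simps)
    thus ?thesis using e1 e2 by simp
  qed
  hence a0: "\<alpha> = 0" using assms(4) by simp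
  hence b0: "\<beta> = 0" using e1 by simp
  have HF: "H n z k = F z" using D[of z] a0 b0 by simp
  have "(z - z1) * (z2 - z) * (z - r) \<ge> 0"
    using assms(3,6,7) rneg by (intro mult_nonneg_nonneg) auto
  hence Fnn: "F z \<ge> 0" unfolding F_def using np
    by (metis (no_types, opaque_lifting) minus_diff_eq mult.assoc mult_minus_left mult_minus_right mult_nonneg_nonneg of_nat_0_le_iff)
  have E: "(z + 1 - 1)^2 * (k + 1)^2 - (z + 1) * (k + 1 - k) * ((2 * (k + 1) + real n * (z + 1)) * (z + 1 - 1)
        + (z + 1) * (real n - 1) * (k + 1 - k)) = H n z k"
    unfolding H_def by (simp add: algebra_simps power2_eq_square power3_eq_cube)
  show ?thesis unfolding admissible_def using E HF Fnn k0 assms(3,6) by simp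
qed

end
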